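(* Let $(b,c)$ be a connected canonically compactifiable weighted graph over $X$ and fix $o\in X$. Then $$\widetilde D_o=\{u\in\widetilde D:\ \hat u|_{\partial X}=0\}.$$
   Context: Let $X$ be a countably infinite set. A weighted graph $(b,c)$ over $X$ consists of a symmetric $b:X\times X\to[0,\infty)$ with $b(x,x)=0$ and $\sum_{y}b(x,y)<\infty$ for all $x$, and $c:X\to[0,\infty)$; connected means any two distinct vertices are joined by a finite path of pairwise distinct vertices with consecutive ones satisfying $b>0$. Let $\widetilde Q(f)=\frac12\sum_{x,y}b(x,y)|f(x)-f(y)|^2+\sum_x c(x)|f(x)|^2$, $\widetilde D=\{f:X\to\mathbb C:\widetilde Q(f)<\infty\}$, and for fixed $o\in X$, $\|f\|_o=(\widetilde Q(f)+|f(o)|^2)^{1/2}$ on $\widetilde D$. Let $C_c(X)$ be the finitely supported functions and $\widetilde D_o$ the closure of $C_c(X)$ in $\widetilde D$ with respect to $\|\cdot\|_o$. The graph is canonically compactifiable if $\widetilde D\subseteq\ell^\infty(X)$. In that case let $\mathcal A$ be the sup-norm closure of $\widetilde D$ in $\ell^\infty(X)$, $\mathcal A^+$ the smallest $C^*$-subalgebra of $\ell^\infty(X)$ containing $\mathcal A$ and $1$, $K$ the set of characters (nonzero multiplicative linear functionals) of $\mathcal A^+$ with the weak-$*$ topology (a compact Hausdorff space), and for $g\in\mathcal A^+$ let $\hat g:K\to\mathbb C$, $\hat g(\gamma)=\gamma(g)$. The map $x\mapsto\delta_x$, $\delta_x(f)=f(x)$, embeds $X$ into $K$; identifying $X$ with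 its image, set $\partial X=K\setminus X$. *)

theory Defs
  imports "HOL-Analysis.Analysis"
begin

definition weighted_graph :: "('x \<Rightarrow> 'x \<Rightarrow> real) \<Rightarrow> ('x \<Rightarrow> real) \<Rightarrow> bool" where
  "weighted_graph b c \<longleftrightarrow>
     (\<forall>x y. b x y \<ge> 0) \<and> (\<forall>x y. b x y = b y x) \<and> (\<forall>x. b x x = 0) \<and>
     (\<forall>x. (\<lambda>y. b x y) summable_on UNIV) \<and> (\<forall>x. c x \<ge> 0)"

definition graph_connected :: "('x \<Rightarrow> 'x \<Rightarrow> real) \<Rightarrow> bool" where
  "graph_connected b \<longleftrightarrow>
     (\<forall>x y. x \<noteq> y \<longrightarrow> (\<exists>p. p \<noteq> [] \<and> hd p = x \<and> last p = y \<and> distinct p \<and>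
        (\<forall>i. Suc i < length p \<longrightarrow> b (p ! i) (p ! Suc i) > 0)))"

definition in_Dt :: "('x \<Rightarrow> 'x \<Rightarrow> real) \<Rightarrow> ('x \<Rightarrow> real) \<Rightarrow> ('x \<Rightarrow> complex) \<Rightarrow> bool" where
  "in_Dt b c f \<longleftrightarrow>
     (\<lambda>(x,y). b x y * (cmod (f x - f y))\<^sup>2) summable_on UNIV \<and>
     (\<lambda>x. c x * (cmod (f x))\<^sup>2) summable_on UNIV"

definition Dt :: "('x \<Rightarrow> 'x \<Rightarrow> real) \<Rightarrow> ('x \<Rightarrow> real) \<Rightarrow> ('x \<Rightarrow> complex) set" where
  "Dt b c = {f. in_Dt b c f}"

definition Qt :: "('x \<Rightarrow> 'x \<Rightarrow> real) \<Rightarrow> ('x \<Rightarrow> real) \<Rightarrow> ('x \<Rightarrow> complex) \<Rightarrow> real" where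
  "Qt b c f = (1/2) * (\<Sum>\<^sub>\<infinity>(x,y). b x y * (cmod (f x - f y))\<^sup>2) + (\<Sum>\<^sub>\<infinity>x. c x * (cmod (f x))\<^sup>2)"

definition norm_o :: "('x \<Rightarrow> 'x \<Rightarrow> real) \<Rightarrow> ('x \<Rightarrow> real) \<Rightarrow> 'x \<Rightarrow> ('x \<Rightarrow> complex) \<Rightarrow> real" where
  "norm_o b c v0 f = sqrt (Qt b c f + (cmod (f v0))\<^sup>2)"

definition Cc :: "('x \<Rightarrow> complex) set" where
  "Cc = {f. finite {x. f x \<noteq> 0}}"

(* closure of C_c(X) in Dt w.r.t. the norm \<parallel>.\<parallel>_o *)
definition Dt_o :: "('x \<Rightarrow> 'x \<Rightarrow> real) \<Rightarrow> ('x \<Rightarrow> real) \<Rightarrow> 'x \<Rightarrow> ('x \<Rightarrow> complex) set" where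
  "Dt_o b c v0 = {f \<in> Dt b c. \<forall>e>0. \<exists>g\<in>Cc. norm_o b c v0 (\<lambda>x. f x - g x) < e}"

definition canonically_compactifiable :: "('x \<Rightarrow> 'x \<Rightarrow> real) \<Rightarrow> ('x \<Rightarrow> real) \<Rightarrow> bool" where
  "canonically_compactifiable b c \<longleftrightarrow> (\<forall>f\<in>Dt b c. bounded (range f))"

(* sup-norm closure of Dt inside l^\<infinity>(X) *)
definition Aalg :: "('x \<Rightarrow> 'x \<Rightarrow> real) \<Rightarrow> ('x \<Rightarrow> real) \<Rightarrow> ('x \<Rightarrow> complex) set" where
  "Aalg b c = {f. bounded (range f) \<and> (\<forall>e>0. \<exists>g\<in>Dt b c. \<forall>x. cmod (f x - g x) \<le> e)}"

definition cstar_subalgebra :: "('x \<Rightarrow> complex) set \<Rightarrow> bool" where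
  "cstar_subalgebra S \<longleftrightarrow>
     (\<forall>f\<in>S. bounded (range f)) \<and> (\<lambda>_. 0) \<in> S \<and>
     (\<forall>f\<in>S. \<forall>g\<in>S. (\<lambda>x. f x + g x) \<in> S) \<and>
     (\<forall>a. \<forall>f\<in>S. (\<lambda>x. a * f x) \<in> S) \<and>
     (\<forall>f\<in>S. \<forall>g\<in>S. (\<lambda>x. f x * g x) \<in> S) \<and>
     (\<forall>f\<in>S. (\<lambda>x. cnj (f x)) \<in> S) \<and>
     (\<forall>f. bounded (range f) \<and> (\<forall>e>0. \<exists>g\<in>S. \<forall>x. cmod (f x - g x) \<le> e) \<longrightarrow> f \<in> S)"

definition Aplus :: "('x \<Rightarrow> 'x \<Rightarrow> real) \<Rightarrow> ('x \<Rightarrow> real) \<Rightarrow> ('x \<Rightarrow> complex) set" where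
  "Aplus b c = \<Inter>{S. cstar_subalgebra S \<and> Aalg b c \<subseteq> S \<and> (\<lambda>_. 1) \<in> S}"

definition is_character :: "('x \<Rightarrow> complex) set \<Rightarrow> (('x \<Rightarrow> complex) \<Rightarrow> complex) \<Rightarrow> bool" where
  "is_character S \<gamma> \<longleftrightarrow>
     (\<forall>f\<in>S. \<forall>g\<in>S. \<gamma> (\<lambda>x. f x + g x) = \<gamma> f + \<gamma> g) \<and>
     (\<forall>a. \<forall>f\<in>S. \<gamma> (\<lambda>x. a * f x) = a * \<gamma> f) \<and>
     (\<forall>f\<in>S. \<forall>g\<in>S. \<gamma> (\<lambda>x. f x * g x) = \<gamma> f * \<gamma> g) \<and>
     (\<exists>f\<in>S. \<gamma> f \<noteq> 0)"

definition boundary :: "('x \<Rightarrow> complex) set \<Rightarrow> (('x \<Rightarrow> complex) \<Rightarrow> complex) set" where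
  "boundary S = {\<gamma>. is_character S \<gamma> \<and> \<not> (\<exists>x. \<forall>f\<in>S. \<gamma> f = f x)}"

end

theory Submission
  imports Defs
begin


lemma cs_add: assumes "cstar_subalgebra S" "f \<in> S" "g \<in> S" shows "(\<lambda>x. f x + g x) \<in> S"
proof -
  have "\<forall>f\<in>S. \<forall>g\<in>S. (\<lambda>x. f x + g x) \<in> S" using assms(1) unfolding cstar_subalgebra_def by (elim conjE) assumption
  thus ?thesis using assms(2,3) by blast
qed
lemma cs_scal: assumes "cstar_subalgebra S" "f \<in> S" shows "(\<lambda>x. a * f x) \<in> S"
proof -
  have "\<forall>a. \<forall>f\<in>S. (\<lambda>x. a * f x) \<in> S" using assms(1) unfolding cstar_subalgebra_def by (elim conjE) assumption
  thus ?thesis using assms(2) by blast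
qed
lemma cs_mult: assumes "cstar_subalgebra S" "f \<in> S" "g \<in> S" shows "(\<lambda>x. f x * g x) \<in> S"
proof -
  have "\<forall>f\<in>S. \<forall>g\<in>S. (\<lambda>x. f x * g x) \<in> S" using assms(1) unfolding cstar_subalgebra_def by (elim conjE) assumption
  thus ?thesis using assms(2,3) by blast
qed
lemma cs_lim: assumes "cstar_subalgebra S" "bounded (range f)" "\<forall>e>0. \<exists>g\<in>S. \<forall>x. cmod (f x - g x) \<le> e"
  shows "f \<in> S"
proof -
  have "\<forall>f. bounded (range f) \<and> (\<forall>e>0. \<exists>g\<in>S. \<forall>x. cmod (f x - g x) \<le> e) \<longrightarrow> f \<in> S"
    using assms(1) unfolding cstar_subalgebra_def by (elim conjE) assumption
  thus ?thesis using assms(2,3) by blast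
qed

lemma Aplus_I: "(\<And>S. cstar_subalgebra S \<Longrightarrow> Aalg b c \<subseteq> S \<Longrightarrow> (\<lambda>_. 1) \<in> S \<Longrightarrow> f \<in> S) \<Longrightarrow> f \<in> Aplus b c"
  unfolding Aplus_def by (rule InterI) (elim CollectE conjE, assumption)
lemma Aplus_D: "f \<in> Aplus b c \<Longrightarrow> cstar_subalgebra S \<Longrightarrow> Aalg b c \<subseteq> S \<Longrightarrow> (\<lambda>_. 1) \<in> S \<Longrightarrow> f \<in> S"
  unfolding Aplus_def by (erule InterD) (intro CollectI conjI)

lemma Aplus_add: "f \<in> Aplus b c \<Longrightarrow> g \<in> Aplus b c \<Longrightarrow> (\<lambda>x. f x + g x) \<in> Aplus b c"
  by (rule Aplus_I) (rule cs_add, assumption, (erule Aplus_D, assumption+)+)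
lemma Aplus_scal: "f \<in> Aplus b c \<Longrightarrow> (\<lambda>x. a * f x) \<in> Aplus b c"
  by (rule Aplus_I) (rule cs_scal, assumption, (erule Aplus_D, assumption+)+)
lemma Aplus_mult: "f \<in> Aplus b c \<Longrightarrow> g \<in> Aplus b c \<Longrightarrow> (\<lambda>x. f x * g x) \<in> Aplus b c"
  by (rule Aplus_I) (rule cs_mult, assumption, (erule Aplus_D, assumption+)+)
lemma Aplus_one: "(\<lambda>_. 1) \<in> Aplus b c"
  by (rule Aplus_I)
lemma Aplus_lim: assumes "bounded (range f)" "\<And>e. e>0 \<Longrightarrow> \<exists>g\<in>Aplus b c. \<forall>x. cmod (f x - g x) \<le> e"
  shows "f \<in> Aplus b c"
proof (rule Aplus_I)
  fix S assume *: "cstar_subalgebra S" "Aalg b c \<subseteq> S" "(\<lambda>_. 1) \<in> S"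
  have "\<forall>e>0. \<exists>g\<in>S. \<forall>x. cmod (f x - g x) \<le> e"
  proof (intro allI impI)
    fix e :: real assume "e > 0"
    then obtain g where "g \<in> Aplus b c" "\<forall>x. cmod (f x - g x) \<le> e" using assms(2) by blast
    moreover have "g \<in> S" using Aplus_D[OF \<open>g \<in> Aplus b c\<close> *] .
    ultimately show "\<exists>g\<in>S. \<forall>x. cmod (f x - g x) \<le> e" by blast
  qed
  then show "f \<in> S" using cs_lim[OF *(1) assms(1)] by blast
qed
lemma Aalg_Aplus: "f \<in> Aalg b c \<Longrightarrow> f \<in> Aplus b c"
  by (rule Aplus_I) (erule subsetD)
lemma Dt_Aplus: assumes "canonically_compactifiable b c" "f \<in> Dt b c" shows "f \<in> Aplus b c"
proof (rule Aalg_Aplus)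
  have "bounded (range f)" using assms unfolding canonically_compactifiable_def by blast
  moreover have "\<forall>e>0. \<exists>g\<in>Dt b c. \<forall>x. cmod (f x - g x) \<le> e"
    using assms(2) by (intro allI impI bexI[of _ f]) auto
  ultimately show "f \<in> Aalg b c" unfolding Aalg_def by blast
qed

lemma charD:
  assumes "is_character S \<gamma>"
  shows "\<And>f g. f \<in> S \<Longrightarrow> g \<in> S \<Longrightarrow> \<gamma> (\<lambda>x. f x + g x) = \<gamma> f + \<gamma> g"
    and "\<And>a f. f \<in> S \<Longrightarrow> \<gamma> (\<lambda>x. a * f x) = a * \<gamma> f"
    and "\<And>f g. f \<in> S \<Longrightarrow> g \<in> S \<Longrightarrow> \<gamma> (\<lambda>x. f x * g x) = \<gamma> f * \<gamma> g"
    and "\<exists>f\<in>S. \<gamma> f \<noteq> 0"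
  using assms unfolding is_character_def by blast+

lemma char_one:
  assumes "is_character (Aplus b c) \<gamma>"
  shows "\<gamma> (\<lambda>_. 1) = 1"
proof -
  from charD(4)[OF assms] obtain f where f: "f \<in> Aplus b c" "\<gamma> f \<noteq> 0" by blast
  have "\<gamma> (\<lambda>x. f x * 1) = \<gamma> f * \<gamma> (\<lambda>_. 1)"
    using charD(3)[OF assms f(1) Aplus_one] .
  then show ?thesis using f by simp
qed



lemma Aplus_zero: "(\<lambda>_. 0) \<in> Aplus b c"
  using Aplus_scal[OF Aplus_one, where a=0 and b=b and c=c] by simp

lemma Aplus_pow: "h \<in> Aplus b c \<Longrightarrow> (\<lambda>x. h x ^ n) \<in> Aplus b c"
proof (induction n)
  case 0 then show ?case using Aplus_one by simp
next
  case (Suc n)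
  then have "(\<lambda>x. h x * h x ^ n) \<in> Aplus b c" using Aplus_mult by blast
  then show ?case by simp
qed

lemma char_bound:
  assumes g: "is_character (Aplus b c) \<gamma>" and h: "h \<in> Aplus b c" and M: "\<And>x. cmod (h x) \<le> M"
  shows "cmod (\<gamma> h) \<le> M"
proof (rule ccontr)
  assume "\<not> cmod (\<gamma> h) \<le> M"
  define l where "l = \<gamma> h"
  have lM: "cmod l > M" using \<open>\<not> _\<close> l_def by simp
  have M0: "M \<ge> 0" using M[of undefined] by (meson norm_ge_zero order_trans)
  have l0: "l \<noteq> 0" using lM M0 by auto
  define k where "k = (\<lambda>x. 1 / (l - h x))"
  have dist: "cmod (l - h x) \<ge> cmod l - M" for x
    using M[of x] norm_triangle_ineq2[of l "h x"] by linarith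
  have kb: "cmod (k x) \<le> 1 / (cmod l - M)" for x
  proof -
    have "cmod (k x) = 1 / cmod (l - h x)" unfolding k_def by (simp add: norm_divide)
    also have "\<dots> \<le> 1 / (cmod l - M)"
      using dist[of x] lM by (intro divide_left_mono mult_pos_pos) auto
    finally show ?thesis .
  qed
  define p where "p = (\<lambda>N x. \<Sum>j<N. h x ^ j / l ^ Suc j)"
  have pA: "p N \<in> Aplus b c" for N
  proof (induction N)
    case 0 then show ?case using Aplus_zero by (simp add: p_def)
  next
    case (Suc N)
    have "(\<lambda>x. p N x + (1 / l ^ Suc N) * h x ^ N) \<in> Aplus b c"
      using Aplus_add[OF Suc Aplus_scal[OF Aplus_pow[OF h]]] .
    moreover have "(\<lambda>x. p N x + (1 / l ^ Suc N) * h x ^ N) = p (Suc N)"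
      unfolding p_def by (auto simp: field_simps)
    ultimately show ?case by simp
  qed
  have pid: "(l - h x) * p N x = 1 - (h x / l) ^ N" for N x
  proof (induction N)
    case 0 then show ?case by (simp add: p_def)
  next
    case (Suc N)
    have "(l - h x) * p (Suc N) x = (l - h x) * p N x + (l - h x) * (h x ^ N / l ^ Suc N)"
      by (simp add: p_def distrib_left)
    also have "\<dots> = 1 - (h x / l) ^ Suc N"
      using Suc l0 by (simp add: field_simps power_divide) (drule arg_cong[where f="\<lambda>t. l * t"], simp add: algebra_simps)
    finally show ?case .
  qed
  define r where "r = M / cmod l"
  have r0: "0 \<le> r" "r < 1" using M0 lM by (auto simp: r_def divide_less_eq)
  have err: "cmod (k x - p N x) \<le> r ^ N / (cmod l - M)" for N x
  proof -
    have ne: "l - h x \<noteq> 0" using dist[of x] lM by auto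
    have pN: "p N x = (1 - (h x / l) ^ N) / (l - h x)"
      using pid[of x N] ne by (simp add: eq_divide_eq mult.commute)
    have "k x - p N x = (h x / l) ^ N * k x"
      unfolding k_def pN by (simp add: diff_divide_distrib[symmetric])
    then have "cmod (k x - p N x) = (cmod (h x) / cmod l) ^ N * cmod (k x)"
      by (simp add: norm_mult norm_power norm_divide)
    also have "\<dots> \<le> r ^ N * (1 / (cmod l - M))"
      unfolding r_def using M[of x] lM M0
      by (intro mult_mono power_mono divide_right_mono kb) auto
    finally show ?thesis by simp
  qed
  have kA: "k \<in> Aplus b c"
  proof (rule Aplus_lim)
    show "bounded (range k)"
      unfolding bounded_iff using kb by blast
  next
    fix e :: real assume "e > 0"
    have "(\<lambda>N. r ^ N) \<longlonglongrightarrow> 0" using r0 by (intro LIMSEQ_power_zero) auto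
    then have "eventually (\<lambda>N. r ^ N < e * (cmod l - M)) sequentially"
      using \<open>e > 0\<close> lM by (intro order_tendstoD) auto
    then obtain N where N: "r ^ N < e * (cmod l - M)" by (auto simp: eventually_sequentially)
    have "cmod (k x - p N x) \<le> e" for x
    proof -
      have "cmod (k x - p N x) \<le> r ^ N / (cmod l - M)" by (rule err)
      also have "\<dots> \<le> e" using N lM by (simp add: divide_le_eq mult.commute)
      finally show ?thesis .
    qed
    then show "\<exists>g\<in>Aplus b c. \<forall>x. cmod (k x - g x) \<le> e" using pA by blast
  qed
  define d where "d = (\<lambda>x. l * 1 + (-1) * h x)"
  have dA1: "(\<lambda>x. l * 1) \<in> Aplus b c" using Aplus_scal[OF Aplus_one] .
  have dA2: "(\<lambda>x. (-1) * h x) \<in> Aplus b c" using Aplus_scal[OF h] .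
  have dA: "d \<in> Aplus b c" unfolding d_def using Aplus_add[OF dA1 dA2] .
  have "\<gamma> d = \<gamma> (\<lambda>x. l * 1) + \<gamma> (\<lambda>x. (-1) * h x)"
    unfolding d_def by (rule charD(1)[OF g dA1 dA2])
  also have "\<dots> = l * 1 + (-1) * l"
    using charD(2)[OF g Aplus_one, of l] charD(2)[OF g h, of "-1"] char_one[OF g] l_def by simp
  finally have gd: "\<gamma> d = 0" by simp
  have "(\<lambda>x. d x * k x) = (\<lambda>_. 1)"
  proof
    fix x
    have ne: "l - h x \<noteq> 0" using dist[of x] lM by auto
    show "d x * k x = 1" unfolding d_def k_def using ne by (simp add: field_simps)
  qed
  then have "\<gamma> (\<lambda>_. 1) = \<gamma> d * \<gamma> k" using charD(3)[OF g dA kA] by simp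
  then show False using gd char_one[OF g] by simp
qed



lemma wgD: assumes "weighted_graph b c"
  shows "\<And>x y. b x y \<ge> 0" "\<And>x y. b x y = b y x" "\<And>x. b x x = 0" "\<And>x. c x \<ge> 0"
  using assms unfolding weighted_graph_def by auto

lemma DtD: assumes "f \<in> Dt b c"
  shows "(\<lambda>(x,y). b x y * (cmod (f x - f y))\<^sup>2) summable_on UNIV"
    "(\<lambda>x. c x * (cmod (f x))\<^sup>2) summable_on UNIV"
  using assms unfolding Dt_def in_Dt_def by auto

lemma Qt_parts: assumes "weighted_graph b c"
  shows "(\<Sum>\<^sub>\<infinity>(x,y). b x y * (cmod (f x - f y))\<^sup>2) \<ge> 0" "(\<Sum>\<^sub>\<infinity>x. c x * (cmod (f x))\<^sup>2) \<ge> 0"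
  using wgD[OF assms] by (auto intro!: infsum_nonneg)

lemma Qt_nonneg: assumes "weighted_graph b c" shows "Qt b c f \<ge> 0"
  unfolding Qt_def using Qt_parts[OF assms, of f] by simp

lemma norm_o_sq: assumes "weighted_graph b c" shows "(norm_o b c v0 f)\<^sup>2 = Qt b c f + (cmod (f v0))\<^sup>2"
  unfolding norm_o_def using Qt_nonneg[OF assms, of f] by (metis real_sqrt_pow2 add_nonneg_nonneg zero_le_power2)

lemma norm_o_nonneg: assumes "weighted_graph b c" shows "norm_o b c v0 f \<ge> 0"
  unfolding norm_o_def using Qt_nonneg[OF assms, of f] by simp

lemma E_le_Qt: assumes "weighted_graph b c" shows "(\<Sum>\<^sub>\<infinity>(x,y). b x y * (cmod (f x - f y))\<^sup>2) \<le> 2 * Qt b c f"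
  unfolding Qt_def using Qt_parts[OF assms, of f] by simp
lemma V_le_Qt: assumes "weighted_graph b c" shows "(\<Sum>\<^sub>\<infinity>x. c x * (cmod (f x))\<^sup>2) \<le> Qt b c f"
  unfolding Qt_def using Qt_parts[OF assms, of f] by simp
lemma Qt_le_norm: assumes "weighted_graph b c" shows "Qt b c f \<le> (norm_o b c v0 f)\<^sup>2"
  using norm_o_sq[OF assms, of v0 f] by simp
lemma v0_le_norm: assumes "weighted_graph b c" shows "cmod (f v0) \<le> norm_o b c v0 f"
  using norm_o_sq[OF assms, of v0 f] Qt_nonneg[OF assms, of f] norm_o_nonneg[OF assms, of v0 f]
  by (metis le_add_same_cancel2 norm_ge_zero power2_le_imp_le)

lemma Efin_le: assumes wg: "weighted_graph b c" and f: "f \<in> Dt b c" and P: "finite P"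
  shows "(\<Sum>p\<in>P. (\<lambda>(x,y). b x y * (cmod (f x - f y))\<^sup>2) p) \<le> 2 * (norm_o b c v0 f)\<^sup>2"
proof -
  have "(\<Sum>p\<in>P. (\<lambda>(x,y). b x y * (cmod (f x - f y))\<^sup>2) p) \<le> (\<Sum>\<^sub>\<infinity>(x,y). b x y * (cmod (f x - f y))\<^sup>2)"
    using wgD[OF wg] by (intro finite_sum_le_infsum DtD[OF f] P) auto
  also have "\<dots> \<le> 2 * Qt b c f" by (rule E_le_Qt[OF wg])
  also have "\<dots> \<le> 2 * (norm_o b c v0 f)\<^sup>2" using Qt_le_norm[OF wg] by simp
  finally show ?thesis .
qed

lemma Vfin_le: assumes wg: "weighted_graph b c" and f: "f \<in> Dt b c" and P: "finite P"
  shows "(\<Sum>x\<in>P. c x * (cmod (f x))\<^sup>2) \<le> (norm_o b c v0 f)\<^sup>2"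
proof -
  have "(\<Sum>x\<in>P. c x * (cmod (f x))\<^sup>2) \<le> (\<Sum>\<^sub>\<infinity>x. c x * (cmod (f x))\<^sup>2)"
    using wgD[OF wg] by (intro finite_sum_le_infsum DtD[OF f] P) auto
  also have "\<dots> \<le> Qt b c f" by (rule V_le_Qt[OF wg])
  also have "\<dots> \<le> (norm_o b c v0 f)\<^sup>2" using Qt_le_norm[OF wg] by simp
  finally show ?thesis .
qed

lemma edge_bound: assumes wg: "weighted_graph b c" and f: "f \<in> Dt b c" and bxy: "b x y > 0"
  shows "cmod (f x - f y) \<le> sqrt (2 / b x y) * norm_o b c v0 f"
proof -
  have "b x y * (cmod (f x - f y))\<^sup>2 \<le> 2 * (norm_o b c v0 f)\<^sup>2"
    using Efin_le[OF wg f, of "{(x,y)}" v0] by simp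
  then have "(cmod (f x - f y))\<^sup>2 \<le> (2 / b x y) * (norm_o b c v0 f)\<^sup>2"
    using bxy by (simp add: field_simps)
  then have "sqrt ((cmod (f x - f y))\<^sup>2) \<le> sqrt ((2 / b x y) * (norm_o b c v0 f)\<^sup>2)"
    by (rule real_sqrt_le_mono)
  also have "sqrt ((2 / b x y) * (norm_o b c v0 f)\<^sup>2) = sqrt (2 / b x y) * norm_o b c v0 f"
    using norm_o_nonneg[OF wg, of v0 f] by (simp only: real_sqrt_mult real_sqrt_abs abs_of_nonneg)
  finally show ?thesis by simp
qed

lemma ptwise_bound:
  assumes wg: "weighted_graph b c" and conn: "graph_connected b"
  shows "\<exists>K\<ge>0. \<forall>f\<in>Dt b c. cmod (f x) \<le> K * norm_o b c v0 f"
proof -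
  define R where "R = {x. \<exists>K\<ge>0. \<forall>f\<in>Dt b c. cmod (f x) \<le> K * norm_o b c v0 f}"
  have R0: "v0 \<in> R" unfolding R_def using v0_le_norm[OF wg] by (intro CollectI exI[of _ 1]) auto
  have Rstep: "y \<in> R" if zR: "z \<in> R" and bzy: "b z y > 0" for y z
  proof -
    from zR obtain K where K: "K \<ge> 0" "\<forall>f\<in>Dt b c. cmod (f z) \<le> K * norm_o b c v0 f"
      unfolding R_def by blast
    have "cmod (f y) \<le> (K + sqrt (2 / b z y)) * norm_o b c v0 f" if f: "f \<in> Dt b c" for f
    proof -
      have "cmod (f y) \<le> cmod (f z) + cmod (f z - f y)"
        using norm_triangle_ineq4[of "f z" "f z - f y"] by (simp add: norm_minus_commute)
      also have "\<dots> \<le> K * norm_o b c v0 f + sqrt (2 / b z y) * norm_o b c v0 f"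
        using K(2) f edge_bound[OF wg f bzy] by (intro add_mono) auto
      finally show ?thesis by (simp add: algebra_simps)
    qed
    moreover have "sqrt (2 / b z y) \<ge> 0" using bzy by simp
    ultimately show ?thesis unfolding R_def using K(1) by (intro CollectI exI[of _ "K + sqrt (2 / b z y)"]) auto
  qed
  have "x \<in> R"
  proof (cases "x = v0")
    case True then show ?thesis using R0 by simp
  next
    case False
    then obtain p where p: "p \<noteq> []" "hd p = v0" "last p = x"
      "\<forall>i. Suc i < length p \<longrightarrow> b (p ! i) (p ! Suc i) > 0"
      using conn unfolding graph_connected_def by metis
    have "i < length p \<longrightarrow> p ! i \<in> R" for i
    proof (induction i)
      case 0 then show ?case using p R0 by (simp add: hd_conv_nth)
    next
      case (Suc i) then show ?case using p(4) Rstep by auto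
    qed
    then have "p ! (length p - 1) \<in> R" using p(1) by simp
    then show ?thesis using p by (simp add: last_conv_nth)
  qed
  then show ?thesis unfolding R_def by blast
qed



lemma geo4: "(\<Sum>n<N. (1/4::real)^n) \<le> 4/3"
proof -
  have "(\<Sum>n<N. (1/4::real)^n) = ((1/4)^N - 1) / (1/4 - 1)"
    by (rule geometric_sum) simp
  also have "\<dots> = (4/3) * (1 - (1/4)^N)" by (simp add: field_simps)
  also have "\<dots> \<le> 4/3" by simp
  finally show ?thesis .
qed

lemma pow4: "(2::real)^(x*2) = 4^x"
proof -
  have "(4::real)^x = (2^2)^x" by simp
  also have "\<dots> = 2^(2*x)" by (rule power_mult[symmetric])
  finally show ?thesis by (simp add: mult.commute)
qed

lemma pow4': "((2::real)^n)\<^sup>2 = 4^n"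
  using pow4[of n] by (simp add: power_mult[symmetric])

lemma cs4: fixes a :: "nat \<Rightarrow> real"
  shows "(\<Sum>n<N. a n)\<^sup>2 \<le> 4/3 * (\<Sum>n<N. 4^n * (a n)\<^sup>2)"
proof -
  have "(\<Sum>n<N. (1/2::real)^n * (2^n * a n))\<^sup>2 \<le> (\<Sum>n<N. ((1/2::real)^n)\<^sup>2) * (\<Sum>n<N. (2^n * a n)\<^sup>2)"
    by (rule Cauchy_Schwarz_ineq_sum)
  moreover have "(\<Sum>n<N. (1/2::real)^n * (2^n * a n)) = (\<Sum>n<N. a n)"
    by (intro sum.cong refl) (simp add: power_one_over field_simps)
  moreover have "(\<Sum>n<N. ((1/2::real)^n)\<^sup>2) = (\<Sum>n<N. (1/4::real)^n)"
    by (intro sum.cong refl) (simp add: power_one_over power_divide pow4')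
  moreover have "(\<Sum>n<N. (2^n * a n)\<^sup>2) = (\<Sum>n<N. 4^n * (a n)\<^sup>2)"
    by (intro sum.cong refl) (simp only: power_mult_distrib pow4')
  moreover have "(\<Sum>n<N. (1/4::real)^n) * (\<Sum>n<N. 4^n * (a n)\<^sup>2) \<le> 4/3 * (\<Sum>n<N. 4^n * (a n)\<^sup>2)"
    by (intro mult_right_mono geo4 sum_nonneg) auto
  ultimately show ?thesis by simp
qed

lemma sq_le_of_abs: fixes a s :: real assumes "\<bar>a\<bar> \<le> s" shows "a\<^sup>2 \<le> s\<^sup>2"
proof -
  have "\<bar>a\<bar>\<^sup>2 \<le> s\<^sup>2" by (rule power_mono[OF assms]) simp
  then show ?thesis by simp
qed

lemma series_Dt:
  assumes wg: "weighted_graph b c"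
    and sm: "\<And>x. summable (\<lambda>n. cmod (h n x))"
    and hE: "\<And>n P. finite P \<Longrightarrow> (\<Sum>p\<in>P. (\<lambda>(x,y). b x y * (cmod (h n x - h n y))\<^sup>2) p) \<le> 2 * (1/16)^n"
    and hV: "\<And>n P. finite P \<Longrightarrow> (\<Sum>x\<in>P. c x * (cmod (h n x))\<^sup>2) \<le> (1/16)^n"
  shows "(\<lambda>x. complex_of_real (\<Sum>n. cmod (h n x))) \<in> Dt b c"
proof -
  define G where "G x = (\<Sum>n. cmod (h n x))" for x
  define GN where "GN N x = (\<Sum>n<N. cmod (h n x))" for N x
  have lim: "(\<lambda>N. GN N x) \<longlonglongrightarrow> G x" for x
    unfolding GN_def G_def by (rule summable_LIMSEQ[OF sm])
  have bpos: "b x y \<ge> 0" "c x \<ge> 0" for x y using wgD[OF wg] by auto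
  have geo: "(\<Sum>n<N. 4^n * (K * (1/16::real)^n)) \<le> K * (4/3)" if "K \<ge> 0" for K N
  proof -
    have t: "4^n * (K * (1/16::real)^n) = K * (1/4)^n" for n
    proof -
      have a: "(1/16::real)^n = (1/4)^n * (1/4)^n" by (simp flip: power_mult_distrib)
      have b: "(4::real)^n * (1/4)^n = 1" by (simp flip: power_mult_distrib)
      have "4^n * (K * (1/16::real)^n) = K * (1/4)^n * ((4::real)^n * (1/4)^n)"
        unfolding a by (simp only: mult_ac)
      then show ?thesis unfolding b by simp
    qed
    have "(\<Sum>n<N. 4^n * (K * (1/16::real)^n)) = K * (\<Sum>n<N. (1/4::real)^n)"
      by (simp add: t sum_distrib_left)
    also have "\<dots> \<le> K * (4/3)" using that geo4 by (intro mult_left_mono) auto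
    finally show ?thesis .
  qed
  have bE: "(\<Sum>p\<in>P. (\<lambda>(x,y). b x y * (GN N x - GN N y)\<^sup>2) p) \<le> 4" if P: "finite P" for P N
  proof -
    have pt: "(\<lambda>(x,y). b x y * (GN N x - GN N y)\<^sup>2) p
        \<le> 4/3 * (\<Sum>n<N. 4^n * (\<lambda>(x,y). b x y * (cmod (h n x - h n y))\<^sup>2) p)" for p
    proof (cases p)
      case (Pair x y)
      have "\<bar>GN N x - GN N y\<bar> = \<bar>\<Sum>n<N. cmod (h n x) - cmod (h n y)\<bar>"
        unfolding GN_def by (simp add: sum_subtractf)
      also have "\<dots> \<le> (\<Sum>n<N. \<bar>cmod (h n x) - cmod (h n y)\<bar>)" by (rule sum_abs)
      also have "\<dots> \<le> (\<Sum>n<N. cmod (h n x - h n y))"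
        by (intro sum_mono norm_triangle_ineq3)
      finally have "(GN N x - GN N y)\<^sup>2 \<le> (\<Sum>n<N. cmod (h n x - h n y))\<^sup>2" by (rule sq_le_of_abs)
      also have "\<dots> \<le> 4/3 * (\<Sum>n<N. 4^n * (cmod (h n x - h n y))\<^sup>2)" by (rule cs4)
      finally have "b x y * (GN N x - GN N y)\<^sup>2 \<le> b x y * (4/3 * (\<Sum>n<N. 4^n * (cmod (h n x - h n y))\<^sup>2))"
        using bpos by (intro mult_left_mono) auto
      then show ?thesis using Pair by (simp add: sum_distrib_left algebra_simps)
    qed
    have "(\<Sum>p\<in>P. (\<lambda>(x,y). b x y * (GN N x - GN N y)\<^sup>2) p)
        \<le> (\<Sum>p\<in>P. 4/3 * (\<Sum>n<N. 4^n * (\<lambda>(x,y). b x y * (cmod (h n x - h n y))\<^sup>2) p))"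
      by (intro sum_mono pt)
    also have "\<dots> = 4/3 * (\<Sum>n<N. 4^n * (\<Sum>p\<in>P. (\<lambda>(x,y). b x y * (cmod (h n x - h n y))\<^sup>2) p))"
      by (simp add: sum_distrib_left sum.swap[of _ P])
    also have "\<dots> \<le> 4/3 * (\<Sum>n<N. 4^n * (2 * (1/16::real)^n))"
      using hE[OF P] by (intro mult_left_mono sum_mono) auto
    also have "\<dots> \<le> 4/3 * (2 * (4/3))" using geo[of 2 N] by (intro mult_left_mono) auto
    finally show ?thesis by simp
  qed
  have bV: "(\<Sum>x\<in>P. c x * (GN N x)\<^sup>2) \<le> 2" if P: "finite P" for P N
  proof -
    have pt: "c x * (GN N x)\<^sup>2 \<le> 4/3 * (\<Sum>n<N. 4^n * (c x * (cmod (h n x))\<^sup>2))" for x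
    proof -
      have "(GN N x)\<^sup>2 \<le> 4/3 * (\<Sum>n<N. 4^n * (cmod (h n x))\<^sup>2)" unfolding GN_def by (rule cs4)
      then have "c x * (GN N x)\<^sup>2 \<le> c x * (4/3 * (\<Sum>n<N. 4^n * (cmod (h n x))\<^sup>2))"
        using bpos by (intro mult_left_mono) auto
      then show ?thesis by (simp add: sum_distrib_left algebra_simps)
    qed
    have "(\<Sum>x\<in>P. c x * (GN N x)\<^sup>2) \<le> (\<Sum>x\<in>P. 4/3 * (\<Sum>n<N. 4^n * (c x * (cmod (h n x))\<^sup>2)))"
      by (intro sum_mono pt)
    also have "\<dots> = 4/3 * (\<Sum>n<N. 4^n * (\<Sum>x\<in>P. c x * (cmod (h n x))\<^sup>2))"
      by (simp add: sum_distrib_left sum.swap[of _ P])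
    also have "\<dots> \<le> 4/3 * (\<Sum>n<N. 4^n * (1 * (1/16::real)^n))"
      using hV[OF P] by (intro mult_left_mono sum_mono) auto
    also have "\<dots> \<le> 4/3 * (1 * (4/3))" using geo[of 1 N] by (intro mult_left_mono) auto
    finally show ?thesis by simp
  qed
  have limE: "(\<Sum>p\<in>P. (\<lambda>(x,y). b x y * (G x - G y)\<^sup>2) p) \<le> 4" if P: "finite P" for P
  proof (rule LIMSEQ_le_const2)
    show "(\<lambda>N. \<Sum>p\<in>P. (\<lambda>(x,y). b x y * (GN N x - GN N y)\<^sup>2) p) \<longlonglongrightarrow> (\<Sum>p\<in>P. (\<lambda>(x,y). b x y * (G x - G y)\<^sup>2) p)"
      by (intro tendsto_sum) (auto simp: case_prod_beta intro!: tendsto_intros lim)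
    show "\<exists>N. \<forall>n\<ge>N. (\<Sum>p\<in>P. (\<lambda>(x,y). b x y * (GN n x - GN n y)\<^sup>2) p) \<le> 4"
      using bE[OF P] by blast
  qed
  have limV: "(\<Sum>x\<in>P. c x * (G x)\<^sup>2) \<le> 2" if P: "finite P" for P
  proof (rule LIMSEQ_le_const2)
    show "(\<lambda>N. \<Sum>x\<in>P. c x * (GN N x)\<^sup>2) \<longlonglongrightarrow> (\<Sum>x\<in>P. c x * (G x)\<^sup>2)"
      by (intro tendsto_sum) (auto intro!: tendsto_intros lim)
    show "\<exists>N. \<forall>n\<ge>N. (\<Sum>x\<in>P. c x * (GN n x)\<^sup>2) \<le> 2"
      using bV[OF P] by blast
  qed
  have s1: "(\<lambda>(x,y). b x y * (cmod (complex_of_real (G x) - complex_of_real (G y)))\<^sup>2) summable_on UNIV"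
  proof (rule nonneg_bdd_above_summable_on)
    show "0 \<le> (\<lambda>(x,y). b x y * (cmod (complex_of_real (G x) - complex_of_real (G y)))\<^sup>2) p" for p
      using bpos by (auto simp: case_prod_beta)
    have "sum (\<lambda>(x,y). b x y * (cmod (complex_of_real (G x) - complex_of_real (G y)))\<^sup>2) F \<le> 4" if "finite F" for F
    proof -
      have "sum (\<lambda>(x,y). b x y * (cmod (complex_of_real (G x) - complex_of_real (G y)))\<^sup>2) F
          = (\<Sum>p\<in>F. (\<lambda>(x,y). b x y * (G x - G y)\<^sup>2) p)"
        by (intro sum.cong refl) (auto simp: case_prod_beta simp flip: of_real_diff)
      also have "\<dots> \<le> 4" using limE[OF that] .
      finally show ?thesis .
    qed
    then show "bdd_above (sum (\<lambda>(x,y). b x y * (cmod (complex_of_real (G x) - complex_of_real (G y)))\<^sup>2) ` {F. F \<subseteq> UNIV \<and> finite F})"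
      by (intro bdd_aboveI2) auto
  qed
  have s2: "(\<lambda>x. c x * (cmod (complex_of_real (G x)))\<^sup>2) summable_on UNIV"
  proof (rule nonneg_bdd_above_summable_on)
    show "0 \<le> c x * (cmod (complex_of_real (G x)))\<^sup>2" for x using bpos by auto
    have "sum (\<lambda>x. c x * (cmod (complex_of_real (G x)))\<^sup>2) F \<le> 2" if "finite F" for F
      using limV[OF that] by simp
    then show "bdd_above (sum (\<lambda>x. c x * (cmod (complex_of_real (G x)))\<^sup>2) ` {F. F \<subseteq> UNIV \<and> finite F})"
      by (intro bdd_aboveI2) auto
  qed
  show ?thesis using s1 s2 unfolding Dt_def in_Dt_def G_def by simp
qed


lemma q16: "((1/4::real)^n)\<^sup>2 = (1/16)^n"
proof -
  have e: "(1/4::real)\<^sup>2 = 1/16" by (simp add: power2_eq_square)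
  have "((1/4::real)^n)\<^sup>2 = (1/4)^(n*2)" by (rule power_mult[symmetric])
  also have "\<dots> = (1/4)^(2*n)" by (simp only: mult.commute)
  also have "\<dots> = ((1/4)\<^sup>2)^n" by (rule power_mult)
  also have "\<dots> = (1/16)^n" by (simp only: e)
  finally show ?thesis .
qed

lemma unif_bound:
  assumes wg: "weighted_graph b c" and conn: "graph_connected b" and cc: "canonically_compactifiable b c"
  shows "\<exists>C\<ge>0. \<forall>f\<in>Dt b c. \<forall>x. cmod (f x) \<le> C * norm_o b c v0 f"
proof (rule ccontr)
  assume neg: "\<not> ?thesis"
  have "\<forall>n::nat. \<exists>f x. f \<in> Dt b c \<and> cmod (f x) > 8^n * norm_o b c v0 f"
  proof
    fix n :: nat
    have "\<not> (\<forall>f\<in>Dt b c. \<forall>x. cmod (f x) \<le> 8^n * norm_o b c v0 f)"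
      using neg by (metis zero_le_numeral zero_le_power)
    then show "\<exists>f x. f \<in> Dt b c \<and> cmod (f x) > 8^n * norm_o b c v0 f" by (auto simp: not_le)
  qed
  then obtain F X where FX: "\<And>n. F n \<in> Dt b c" "\<And>n. cmod (F n (X n)) > 8^n * norm_o b c v0 (F n)"
    by metis
  define N where "N n = norm_o b c v0 (F n)" for n
  have N0: "N n \<ge> 0" for n unfolding N_def by (rule norm_o_nonneg[OF wg])
  have Fpos: "cmod (F n (X n)) > 0" for n
  proof -
    have "8^n * N n \<ge> 0" using N0[of n] by simp
    then show ?thesis using FX(2)[of n] unfolding N_def by linarith
  qed
  define t where "t n = 2^n / cmod (F n (X n))" for n
  have t0: "t n > 0" for n unfolding t_def using Fpos by simp
  have tN: "t n * N n \<le> (1/4)^n" for n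
  proof -
    have "8^n * N n \<le> cmod (F n (X n))" using FX(2)[of n] unfolding N_def by simp
    then have "(1/4)^n * (8^n * N n) \<le> (1/4)^n * cmod (F n (X n))" by (intro mult_left_mono) auto
    moreover have "(1/4::real)^n * (8^n * N n) = 2^n * N n"
    proof -
      have "(1/4::real)^n * 8^n = 2^n" by (simp flip: power_mult_distrib)
      then show ?thesis by (metis mult.assoc)
    qed
    ultimately have "2^n * N n \<le> (1/4)^n * cmod (F n (X n))" by simp
    then have "2^n * N n / cmod (F n (X n)) \<le> (1/4)^n" using Fpos[of n] by (simp add: divide_le_eq)
    then show ?thesis unfolding t_def by simp
  qed
  define h where "h n y = complex_of_real (t n) * F n y" for n y
  have hX: "cmod (h n (X n)) = 2^n" for n
  proof -
    have "cmod (h n (X n)) = t n * cmod (F n (X n))" unfolding h_def using t0[of n]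
      by (simp only: norm_mult norm_of_real abs_of_pos)
    then show ?thesis unfolding t_def using Fpos[of n] by simp
  qed
  have hE: "(\<Sum>p\<in>P. (\<lambda>(x,y). b x y * (cmod (h n x - h n y))\<^sup>2) p) \<le> 2 * (1/16)^n" if P: "finite P" for n P
  proof -
    have "(\<Sum>p\<in>P. (\<lambda>(x,y). b x y * (cmod (h n x - h n y))\<^sup>2) p)
        = (t n)\<^sup>2 * (\<Sum>p\<in>P. (\<lambda>(x,y). b x y * (cmod (F n x - F n y))\<^sup>2) p)"
      unfolding h_def sum_distrib_left
      by (intro sum.cong refl) (auto simp: case_prod_beta norm_mult power_mult_distrib
          simp flip: right_diff_distrib)
    also have "\<dots> \<le> (t n)\<^sup>2 * (2 * (N n)\<^sup>2)"
      unfolding N_def by (intro mult_left_mono Efin_le[OF wg FX(1) P]) auto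
    also have "\<dots> = 2 * (t n * N n)\<^sup>2" by (simp add: power_mult_distrib)
    also have "\<dots> \<le> 2 * ((1/4)^n)\<^sup>2"
      using tN[of n] t0[of n] N0[of n] by (intro mult_left_mono power_mono) auto
    also have "\<dots> = 2 * (1/16)^n" by (simp only: q16)
    finally show ?thesis .
  qed
  have hV: "(\<Sum>x\<in>P. c x * (cmod (h n x))\<^sup>2) \<le> (1/16)^n" if P: "finite P" for n P
  proof -
    have "(\<Sum>x\<in>P. c x * (cmod (h n x))\<^sup>2) = (t n)\<^sup>2 * (\<Sum>x\<in>P. c x * (cmod (F n x))\<^sup>2)"
      unfolding h_def sum_distrib_left
      by (intro sum.cong refl) (auto simp: norm_mult power_mult_distrib)
    also have "\<dots> \<le> (t n)\<^sup>2 * (N n)\<^sup>2"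
      unfolding N_def by (intro mult_left_mono Vfin_le[OF wg FX(1) P]) auto
    also have "\<dots> = (t n * N n)\<^sup>2" by (simp add: power_mult_distrib)
    also have "\<dots> \<le> ((1/4)^n)\<^sup>2"
      using tN[of n] t0[of n] N0[of n] by (intro power_mono) auto
    also have "\<dots> = (1/16)^n" by (rule q16)
    finally show ?thesis .
  qed
  have sm: "summable (\<lambda>n. cmod (h n x))" for x
  proof -
    obtain K where K: "K \<ge> 0" "\<forall>f\<in>Dt b c. cmod (f x) \<le> K * norm_o b c v0 f"
      using ptwise_bound[OF wg conn, of x v0] by (elim exE conjE) (rule that, assumption+)
    have bnd: "cmod (h n x) \<le> K * (1/4)^n" for n
    proof -
      have "cmod (h n x) = t n * cmod (F n x)" unfolding h_def using t0[of n]
        by (simp only: norm_mult norm_of_real abs_of_pos)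
      also have "\<dots> \<le> t n * (K * N n)"
      proof -
        have "cmod (F n x) \<le> K * N n" using K(2) FX(1)[of n] unfolding N_def by blast
        then show ?thesis using t0[of n] by (simp only: mult_le_cancel_left_pos)
      qed
      also have "\<dots> = K * (t n * N n)" by simp
      also have "\<dots> \<le> K * (1/4)^n" using tN[of n] K(1) by (rule mult_left_mono)
      finally show ?thesis .
    qed
    have gs: "summable (\<lambda>n. K * (1/4::real)^n)" by (rule summable_mult, rule summable_geometric) simp
    show ?thesis
    proof (rule summable_comparison_test'[where N=0, OF gs])
      fix n :: nat
      show "norm (cmod (h n x)) \<le> K * (1/4)^n" using bnd[of n] by simp
    qed
  qed
  have GD: "(\<lambda>x. complex_of_real (\<Sum>n. cmod (h n x))) \<in> Dt b c"
    by (rule series_Dt[OF wg sm hE hV])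
  have "bounded (range (\<lambda>x. complex_of_real (\<Sum>n. cmod (h n x))))"
    using cc[unfolded canonically_compactifiable_def, rule_format, OF GD] .
  then obtain B where B: "\<And>x. cmod (complex_of_real (\<Sum>n. cmod (h n x))) \<le> B"
    unfolding bounded_iff by auto
  have ge: "2^n \<le> (\<Sum>m. cmod (h m (X n)))" for n
  proof -
    have "(\<Sum>m<Suc n. cmod (h m (X n))) \<le> (\<Sum>m. cmod (h m (X n)))"
      by (intro sum_le_suminf sm) auto
    moreover have "cmod (h n (X n)) \<le> (\<Sum>m<Suc n. cmod (h m (X n)))"
      by (intro member_le_sum) auto
    ultimately show ?thesis using hX by simp
  qed
  obtain n :: nat where "B < real n" using reals_Archimedean2 by blast
  also have "real n < 2^n" using less_exp[of n] by (metis of_nat_less_iff of_nat_numeral of_nat_power)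
  also have "\<dots> \<le> (\<Sum>m. cmod (h m (X n)))" by (rule ge)
  also have "\<dots> \<le> B" using B[of "X n"] by simp
  finally show False by simp
qed



lemma sq_sum_le: fixes p q :: real assumes "0 \<le> s" "s \<le> p + q" "0 \<le> p" "0 \<le> q"
  shows "s\<^sup>2 \<le> 2 * p\<^sup>2 + 2 * q\<^sup>2"
proof -
  have "s\<^sup>2 \<le> (p + q)\<^sup>2" using assms by (intro power_mono) auto
  also have "\<dots> \<le> 2 * p\<^sup>2 + 2 * q\<^sup>2" using sum_squares_bound[of p q] by (simp add: power2_eq_square algebra_simps)
  finally show ?thesis .
qed

lemma Dt_diff: assumes wg: "weighted_graph b c" and f: "f \<in> Dt b c" and g: "g \<in> Dt b c"
  shows "(\<lambda>x. f x - g x) \<in> Dt b c"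
proof -
  have bpos: "b x y \<ge> 0" "c x \<ge> 0" for x y using wgD[OF wg] by auto
  have s1: "(\<lambda>(x,y). 2 * (b x y * (cmod (f x - f y))\<^sup>2) + 2 * (b x y * (cmod (g x - g y))\<^sup>2)) summable_on UNIV"
    using summable_on_add[OF summable_on_cmult_right[OF DtD(1)[OF f]] summable_on_cmult_right[OF DtD(1)[OF g]], of 2 2]
    by (simp add: split_def)
  have s2: "(\<lambda>x. 2 * (c x * (cmod (f x))\<^sup>2) + 2 * (c x * (cmod (g x))\<^sup>2)) summable_on UNIV"
    using summable_on_add[OF summable_on_cmult_right[OF DtD(2)[OF f]] summable_on_cmult_right[OF DtD(2)[OF g]], of 2 2]
    by simp
  have e1: "(\<lambda>(x,y). b x y * (cmod ((f x - g x) - (f y - g y)))\<^sup>2) summable_on UNIV"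
  proof (rule summable_on_comparison_test[OF s1])
    fix p :: "'a \<times> 'a"
    obtain x y where p: "p = (x,y)" by (cases p)
    have "(cmod ((f x - g x) - (f y - g y)))\<^sup>2 \<le> 2 * (cmod (f x - f y))\<^sup>2 + 2 * (cmod (g x - g y))\<^sup>2"
    proof (rule sq_sum_le)
      have "(f x - g x) - (f y - g y) = (f x - f y) - (g x - g y)" by simp
      then show "cmod ((f x - g x) - (f y - g y)) \<le> cmod (f x - f y) + cmod (g x - g y)"
        using norm_triangle_ineq4 by metis
    qed auto
    then have "b x y * (cmod ((f x - g x) - (f y - g y)))\<^sup>2 \<le> b x y * (2 * (cmod (f x - f y))\<^sup>2 + 2 * (cmod (g x - g y))\<^sup>2)"
      using bpos by (intro mult_left_mono) auto
    then show "(\<lambda>(x,y). b x y * (cmod ((f x - g x) - (f y - g y)))\<^sup>2) p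
        \<le> (\<lambda>(x,y). 2 * (b x y * (cmod (f x - f y))\<^sup>2) + 2 * (b x y * (cmod (g x - g y))\<^sup>2)) p"
      unfolding p by (simp add: algebra_simps)
    show "0 \<le> (\<lambda>(x,y). b x y * (cmod ((f x - g x) - (f y - g y)))\<^sup>2) p"
      unfolding p using bpos by simp
  qed
  have e2: "(\<lambda>x. c x * (cmod (f x - g x))\<^sup>2) summable_on UNIV"
  proof (rule summable_on_comparison_test[OF s2])
    fix x
    have "(cmod (f x - g x))\<^sup>2 \<le> 2 * (cmod (f x))\<^sup>2 + 2 * (cmod (g x))\<^sup>2"
      by (rule sq_sum_le) (auto intro: norm_triangle_ineq4)
    then have "c x * (cmod (f x - g x))\<^sup>2 \<le> c x * (2 * (cmod (f x))\<^sup>2 + 2 * (cmod (g x))\<^sup>2)"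
      using bpos by (intro mult_left_mono) auto
    then show "c x * (cmod (f x - g x))\<^sup>2 \<le> 2 * (c x * (cmod (f x))\<^sup>2) + 2 * (c x * (cmod (g x))\<^sup>2)"
      by (simp add: algebra_simps)
    show "0 \<le> c x * (cmod (f x - g x))\<^sup>2" using bpos by simp
  qed
  show ?thesis unfolding Dt_def in_Dt_def using e1 e2 by simp
qed

lemma row_summable: assumes wg: "weighted_graph b c"
  shows "(\<lambda>(x,y). if x = s then b x y else 0) summable_on UNIV"
proof -
  have "(\<lambda>y. b s y) summable_on UNIV" using wg unfolding weighted_graph_def by blast
  then have "((\<lambda>(x,y). if x = s then b x y else 0) \<circ> Pair s) summable_on UNIV"
    by (simp add: o_def)
  then have "(\<lambda>(x,y). if x = s then b x y else 0) summable_on (Pair s ` UNIV)"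
    by (subst summable_on_reindex) (auto simp: inj_on_def)
  then show ?thesis
    by (rule summable_on_cong_neutral[THEN iffD1, rotated -1]) auto
qed

lemma col_summable: assumes wg: "weighted_graph b c"
  shows "(\<lambda>(x,y). if y = s then b x y else 0) summable_on UNIV"
proof -
  have "(\<lambda>x. b s x) summable_on UNIV" using wg unfolding weighted_graph_def by blast
  then have "(\<lambda>x. b x s) summable_on UNIV" using wgD(2)[OF wg] by simp
  then have "((\<lambda>(x,y). if y = s then b x y else 0) \<circ> (\<lambda>x. (x,s))) summable_on UNIV"
    by (simp add: o_def)
  then have "(\<lambda>(x,y). if y = s then b x y else 0) summable_on ((\<lambda>x. (x,s)) ` UNIV)"
    by (subst summable_on_reindex) (auto simp: inj_on_def)
  then show ?thesis
    by (rule summable_on_cong_neutral[THEN iffD1, rotated -1]) auto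
qed

lemma rowcol_summable: assumes wg: "weighted_graph b c" and S: "finite S"
  shows "(\<lambda>(x,y). \<Sum>s\<in>S. (if x = s then b x y else 0) + (if y = s then b x y else 0)) summable_on UNIV"
  using S
proof (induction S rule: finite_induct)
  case empty then show ?case by simp
next
  case (insert s S)
  have "(\<lambda>p. (\<lambda>(x,y). (if x = s then b x y else 0) + (if y = s then b x y else 0)) p
      + (\<lambda>(x,y). \<Sum>s\<in>S. (if x = s then b x y else 0) + (if y = s then b x y else 0)) p) summable_on UNIV"
    using summable_on_add[OF row_summable[OF wg, of s] col_summable[OF wg, of s]] insert.IH
    by (intro summable_on_add) (auto simp: case_prod_beta)
  then show ?case using insert by (simp add: case_prod_beta)
qed

lemma Cc_Dt: assumes wg: "weighted_graph b c" and g: "g \<in> Cc"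
  shows "g \<in> Dt b c"
proof -
  define S where "S = {x. g x \<noteq> 0}"
  have S: "finite S" using g unfolding Cc_def S_def by simp
  define M where "M = (\<Sum>x\<in>S. cmod (g x))"
  have M: "cmod (g x) \<le> M" for x
  proof (cases "x \<in> S")
    case True then show ?thesis unfolding M_def using S by (intro member_le_sum) auto
  next
    case False then show ?thesis unfolding M_def S_def by (simp add: sum_nonneg)
  qed
  have M0: "M \<ge> 0" using M[of undefined] norm_ge_zero order_trans by blast
  have bpos: "b x y \<ge> 0" "c x \<ge> 0" for x y using wgD[OF wg] by auto
  have e1: "(\<lambda>(x,y). b x y * (cmod (g x - g y))\<^sup>2) summable_on UNIV"
  proof (rule summable_on_comparison_test)
    show "(\<lambda>p. (2*M)\<^sup>2 * (\<lambda>(x,y). \<Sum>s\<in>S. (if x = s then b x y else 0) + (if y = s then b x y else 0)) p) summable_on UNIV"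
      by (rule summable_on_cmult_right[OF rowcol_summable[OF wg S]])
    fix p :: "'a \<times> 'a"
    obtain x y where p: "p = (x,y)" by (cases p)
    show "0 \<le> (\<lambda>(x,y). b x y * (cmod (g x - g y))\<^sup>2) p" unfolding p using bpos by simp
    have le: "b x y \<le> (\<Sum>s\<in>S. (if x = s then b x y else 0) + (if y = s then b x y else 0))"
      if "x \<in> S \<or> y \<in> S"
    proof (cases "x \<in> S")
      case True
      have "b x y \<le> (if x = x then b x y else 0) + (if y = x then b x y else 0)" using bpos by simp
      also have "\<dots> \<le> (\<Sum>s\<in>S. (if x = s then b x y else 0) + (if y = s then b x y else 0))"
        using True S bpos by (intro member_le_sum[where f="\<lambda>s. (if x = s then b x y else 0) + (if y = s then b x y else 0)"]) auto
      finally show ?thesis .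
    next
      case False
      then have yS: "y \<in> S" using that by blast
      have "b x y \<le> (if x = y then b x y else 0) + (if y = y then b x y else 0)" using bpos by simp
      also have "\<dots> \<le> (\<Sum>s\<in>S. (if x = s then b x y else 0) + (if y = s then b x y else 0))"
        using yS S bpos by (intro member_le_sum[where f="\<lambda>s. (if x = s then b x y else 0) + (if y = s then b x y else 0)"]) auto
      finally show ?thesis .
    qed
    show "(\<lambda>(x,y). b x y * (cmod (g x - g y))\<^sup>2) p
      \<le> (2*M)\<^sup>2 * (\<lambda>(x,y). \<Sum>s\<in>S. (if x = s then b x y else 0) + (if y = s then b x y else 0)) p"
    proof (cases "x \<in> S \<or> y \<in> S")
      case True
      have "(cmod (g x - g y))\<^sup>2 \<le> (2*M)\<^sup>2"
      proof (rule power_mono)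
        show "cmod (g x - g y) \<le> 2 * M" using norm_triangle_ineq4[of "g x" "g y"] M[of x] M[of y] by linarith
      qed simp
      then have "b x y * (cmod (g x - g y))\<^sup>2 \<le> (2*M)\<^sup>2 * b x y"
        using bpos by (simp add: mult_left_mono mult.commute)
      also have "\<dots> \<le> (2*M)\<^sup>2 * (\<Sum>s\<in>S. (if x = s then b x y else 0) + (if y = s then b x y else 0))"
        using le[OF True] by (intro mult_left_mono) auto
      finally show ?thesis unfolding p by simp
    next
      case False
      then have "g x = 0" "g y = 0" unfolding S_def by auto
      then show ?thesis unfolding p using bpos S by (simp add: sum_nonneg)
    qed
  qed
  have e2: "(\<lambda>x. c x * (cmod (g x))\<^sup>2) summable_on UNIV"
  proof -
    have "(\<lambda>x. c x * (cmod (g x))\<^sup>2) summable_on S" using S by simp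
    then show ?thesis by (rule summable_on_cong_neutral[THEN iffD1, rotated -1]) (auto simp: S_def)
  qed
  show ?thesis unfolding Dt_def in_Dt_def using e1 e2 by simp
qed



lemma delta_Cc: "(\<lambda>x. if x = s then (1::complex) else 0) \<in> Cc"
  unfolding Cc_def by simp

lemma boundaryD: assumes "\<gamma> \<in> boundary S"
  shows "is_character S \<gamma>" "\<not> (\<exists>x. \<forall>f\<in>S. \<gamma> f = f x)"
  using assms unfolding boundary_def by auto

lemma bnd_delta:
  assumes wg: "weighted_graph b c" and cc: "canonically_compactifiable b c"
    and gb: "\<gamma> \<in> boundary (Aplus b c)"
  shows "\<gamma> (\<lambda>x. if x = s then 1 else 0) = 0"
proof (rule ccontr)
  assume ne: "\<gamma> (\<lambda>x. if x = s then 1 else 0) \<noteq> 0"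
  define e where "e = (\<lambda>x. if x = s then (1::complex) else 0)"
  have g: "is_character (Aplus b c) \<gamma>" using boundaryD[OF gb] by simp
  have eA: "e \<in> Aplus b c" unfolding e_def by (rule Dt_Aplus[OF cc Cc_Dt[OF wg delta_Cc]])
  have "(\<lambda>x. e x * e x) = e" unfolding e_def by auto
  then have "\<gamma> e = \<gamma> e * \<gamma> e" using charD(3)[OF g eA eA] by simp
  then have e1: "\<gamma> e = 1" using ne unfolding e_def by simp
  have "\<gamma> f = f s" if f: "f \<in> Aplus b c" for f
  proof -
    have eqf: "(\<lambda>x. f x * e x) = (\<lambda>x. f s * e x)" unfolding e_def by auto
    have h1: "\<gamma> (\<lambda>x. f x * e x) = \<gamma> f * \<gamma> e" by (rule charD(3)[OF g f eA])
    have h2: "\<gamma> (\<lambda>x. f s * e x) = f s * \<gamma> e" by (rule charD(2)[OF g eA])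
    have "\<gamma> f * \<gamma> e = f s * \<gamma> e" using h1 h2 eqf by metis
    then show ?thesis using e1 by simp
  qed
  then show False using boundaryD(2)[OF gb] by blast
qed

lemma bnd_Cc:
  assumes wg: "weighted_graph b c" and cc: "canonically_compactifiable b c"
    and gb: "\<gamma> \<in> boundary (Aplus b c)" and g: "g \<in> Cc"
  shows "\<gamma> g = 0"
proof -
  have ch: "is_character (Aplus b c) \<gamma>" using boundaryD[OF gb] by simp
  define S where "S = {x. g x \<noteq> 0}"
  have S: "finite S" using g unfolding Cc_def S_def by simp
  have dA: "(\<lambda>x. if x = s then 1 else 0) \<in> Aplus b c" for s
    by (rule Dt_Aplus[OF cc Cc_Dt[OF wg delta_Cc]])
  have main: "(\<lambda>x. \<Sum>s\<in>T. g s * (if x = s then 1 else 0)) \<in> Aplus b c \<and>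
      \<gamma> (\<lambda>x. \<Sum>s\<in>T. g s * (if x = s then 1 else 0)) = 0" if "finite T" for T
    using that
  proof (induction T rule: finite_induct)
    case empty
    have "\<gamma> (\<lambda>x. 0 * 1) = 0 * \<gamma> (\<lambda>_. 1)" by (rule charD(2)[OF ch Aplus_one])
    then show ?case using Aplus_zero by simp
  next
    case (insert s T)
    have A1: "(\<lambda>x. g s * (if x = s then 1 else 0)) \<in> Aplus b c" by (rule Aplus_scal[OF dA])
    have eq: "(\<lambda>x. \<Sum>s\<in>insert s T. g s * (if x = s then 1 else 0))
        = (\<lambda>x. g s * (if x = s then 1 else 0) + (\<Sum>s\<in>T. g s * (if x = s then 1 else 0)))"
      using insert by simp
    have "\<gamma> (\<lambda>x. g s * (if x = s then 1 else 0) + (\<Sum>s\<in>T. g s * (if x = s then 1 else 0)))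
        = \<gamma> (\<lambda>x. g s * (if x = s then 1 else 0)) + \<gamma> (\<lambda>x. \<Sum>s\<in>T. g s * (if x = s then 1 else 0))"
      using charD(1)[OF ch A1 conjunct1[OF insert.IH]] by simp
    also have "\<dots> = 0"
      using charD(2)[OF ch dA, of "g s" s] bnd_delta[OF wg cc gb, of s] insert.IH by simp
    finally show ?case unfolding eq using Aplus_add[OF A1 conjunct1[OF insert.IH]] by simp
  qed
  have "(\<lambda>x. \<Sum>s\<in>S. g s * (if x = s then 1 else 0)) = g"
  proof
    fix x
    show "(\<Sum>s\<in>S. g s * (if x = s then 1 else 0)) = g x"
    proof (cases "x \<in> S")
      case True
      have "(\<Sum>s\<in>S. g s * (if x = s then 1 else 0)) = (\<Sum>s\<in>S. if s = x then g s else 0)"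
        by (intro sum.cong) auto
      then show ?thesis using True S by simp
    next
      case False
      then have "(\<Sum>s\<in>S. g s * (if x = s then 1 else 0)) = 0" by (intro sum.neutral) auto
      then show ?thesis using False unfolding S_def by simp
    qed
  qed
  then show ?thesis using main[OF S] by simp
qed

lemma subset_dir:
  assumes wg: "weighted_graph b c" and conn: "graph_connected b" and cc: "canonically_compactifiable b c"
    and u: "u \<in> Dt_o b c v0" and gb: "\<gamma> \<in> boundary (Aplus b c)"
  shows "\<gamma> u = 0"
proof -
  have ch: "is_character (Aplus b c) \<gamma>" using boundaryD[OF gb] by simp
  obtain C where C: "C \<ge> 0" "\<forall>f\<in>Dt b c. \<forall>x. cmod (f x) \<le> C * norm_o b c v0 f"
    using unif_bound[OF wg conn cc, of v0] by (elim exE conjE) (rule that, assumption+)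
  have uD: "u \<in> Dt b c" and uapp: "\<forall>e>0. \<exists>g\<in>Cc. norm_o b c v0 (\<lambda>x. u x - g x) < e"
    using u unfolding Dt_o_def by auto
  have le_e: "cmod (\<gamma> u) \<le> e" if e: "e > 0" for e
  proof -
    from uapp obtain g where g: "g \<in> Cc" "norm_o b c v0 (\<lambda>x. u x - g x) < e / (C + 1)"
      using e C(1) by (meson divide_pos_pos add_nonneg_pos zero_less_one)
    define d where "d = (\<lambda>x. u x - g x)"
    have dD: "d \<in> Dt b c" unfolding d_def by (rule Dt_diff[OF wg uD Cc_Dt[OF wg g(1)]])
    have "C * norm_o b c v0 d \<le> (C + 1) * (e / (C + 1))"
      using g(2) C(1) norm_o_nonneg[OF wg, of v0 d] unfolding d_def
      by (intro mult_mono) auto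
    also have "\<dots> = e" using C(1) by simp
    finally have dle: "cmod (d x) \<le> e" for x using C(2) dD by (meson order_trans)
    have gA: "g \<in> Aplus b c" by (rule Dt_Aplus[OF cc Cc_Dt[OF wg g(1)]])
    have uA: "u \<in> Aplus b c" by (rule Dt_Aplus[OF cc uD])
    have d_eq: "d = (\<lambda>x. u x + (-1) * g x)" unfolding d_def by simp
    have "\<gamma> d = \<gamma> (\<lambda>x. u x + (-1) * g x)" by (simp only: d_eq)
    also have "\<dots> = \<gamma> u + \<gamma> (\<lambda>x. (-1) * g x)" by (rule charD(1)[OF ch uA Aplus_scal[OF gA]])
    also have "\<dots> = \<gamma> u + (-1) * \<gamma> g" by (simp only: charD(2)[OF ch gA])
    finally have "\<gamma> d = \<gamma> u + (-1) * \<gamma> g" .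
    then have "\<gamma> d = \<gamma> u" using bnd_Cc[OF wg cc gb g(1)] by simp
    moreover have "cmod (\<gamma> d) \<le> e" by (rule char_bound[OF ch Dt_Aplus[OF cc dD] dle])
    ultimately show ?thesis by simp
  qed
  have "cmod (\<gamma> u) \<le> 0 + e" if "e > 0" for e using le_e[OF that] by simp
  then have "cmod (\<gamma> u) \<le> 0" by (rule field_le_epsilon)
  then show ?thesis by simp
qed



lemma ultra_exists:
  fixes G :: "'a filter" assumes G: "G \<noteq> bot"
  shows "\<exists>F. F \<noteq> bot \<and> F \<le> G \<and> (\<forall>P. eventually P F \<or> eventually (\<lambda>x. \<not> P x) F)"
proof -
  define A where "A = {E. \<exists>F. F \<noteq> bot \<and> F \<le> G \<and> E = {P. eventually P F}}"
  have "\<exists>M\<in>A. \<forall>X\<in>A. M \<subseteq> X \<longrightarrow> X = M"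
  proof (rule Zorn_Lemma2, intro ballI)
    fix C assume C: "C \<in> chains A"
    show "\<exists>U\<in>A. \<forall>X\<in>C. X \<subseteq> U"
    proof (cases "C = {}")
      case True
      have "{P. eventually P G} \<in> A" unfolding A_def using G by (intro CollectI exI[of _ G] conjI) auto
      then show ?thesis using True by blast
    next
      case False
      have CA: "C \<subseteq> A" using chainsD2[OF C] .
      define FF where "FF E = (SOME F. F \<noteq> bot \<and> F \<le> G \<and> E = {P. eventually P F})" for E
      have FF: "FF E \<noteq> bot \<and> FF E \<le> G \<and> E = {P. eventually P (FF E)}" if "E \<in> C" for E
      proof -
        have "\<exists>F. F \<noteq> bot \<and> F \<le> G \<and> E = {P. eventually P F}" using CA that unfolding A_def by blast
        then show ?thesis unfolding FF_def by (rule someI_ex)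
      qed
      have mono: "FF E2 \<le> FF E1" if "E1 \<in> C" "E2 \<in> C" "E1 \<subseteq> E2" for E1 E2
      proof (rule filter_leI)
        fix P assume "eventually P (FF E1)"
        then have "P \<in> E1" using FF[OF that(1)] by blast
        then have "P \<in> E2" using that(3) by blast
        then show "eventually P (FF E2)" using FF[OF that(2)] by blast
      qed
      have dir: "\<exists>x\<in>C. FF x \<le> inf (FF a) (FF b)" if "a \<in> C" "b \<in> C" for a b
      proof (cases "a \<subseteq> b")
        case True
        then show ?thesis using mono[OF that True] that by (intro bexI[of _ b]) auto
      next
        case False
        then have "b \<subseteq> a" using chainsD[OF C that] by blast
        then show ?thesis using mono[OF that(2,1)] that by (intro bexI[of _ a]) auto
      qed
      define Fi where "Fi = (INF E\<in>C. FF E)"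
      have ev: "eventually P Fi \<longleftrightarrow> (\<exists>E\<in>C. eventually P (FF E))" for P
        unfolding Fi_def by (rule eventually_INF_base[OF False dir])
      have U: "\<Union>C = {P. eventually P Fi}"
      proof (intro set_eqI iffI)
        fix P assume "P \<in> \<Union>C"
        then obtain E where "E \<in> C" "P \<in> E" by blast
        then show "P \<in> {P. eventually P Fi}" using FF[of E] ev by blast
      next
        fix P assume "P \<in> {P. eventually P Fi}"
        then obtain E where "E \<in> C" "eventually P (FF E)" using ev by blast
        then show "P \<in> \<Union>C" using FF[of E] by blast
      qed
      have Fnb: "Fi \<noteq> bot"
      proof
        assume "Fi = bot"
        then have "eventually (\<lambda>x. False) Fi" by simp
        then obtain E where "E \<in> C" "eventually (\<lambda>x. False) (FF E)" using ev by blast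
        then show False using FF[of E] eventually_False by blast
      qed
      obtain E0 where E0: "E0 \<in> C" using False by blast
      have FiG: "Fi \<le> G" unfolding Fi_def using FF[OF E0] E0 by (meson INF_lower2)
      have "\<Union>C \<in> A" unfolding A_def using Fnb FiG U by (intro CollectI exI[of _ Fi] conjI)
      moreover have "\<forall>X\<in>C. X \<subseteq> \<Union>C" by blast
      ultimately show ?thesis by (rule bexI[rotated])
    qed
  qed
  then obtain M where MA: "M \<in> A" and Mmax: "\<forall>X\<in>A. M \<subseteq> X \<longrightarrow> X = M" by blast
  then obtain F where F: "F \<noteq> bot" "F \<le> G" "M = {P. eventually P F}" unfolding A_def by blast
  have "eventually P F \<or> eventually (\<lambda>x. \<not> P x) F" for P
  proof (rule disjCI)
    assume nP: "\<not> eventually (\<lambda>x. \<not> P x) F"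
    define F' where "F' = inf F (principal {x. P x})"
    have F'nb: "F' \<noteq> bot"
    proof
      assume "F' = bot"
      then have "eventually (\<lambda>x. False) F'" by simp
      then have "eventually (\<lambda>x. \<not> P x) F" unfolding F'_def eventually_inf_principal by simp
      then show False using nP by blast
    qed
    have F'F: "F' \<le> F" unfolding F'_def by simp
    have "F' \<le> G" using F'F F(2) by (rule order_trans)
    then have "{P. eventually P F'} \<in> A" unfolding A_def using F'nb by (intro CollectI exI[of _ F'] conjI) auto
    moreover have "M \<subseteq> {P. eventually P F'}" using F(3) F'F filter_leD by blast
    ultimately have "{P. eventually P F'} = M" using Mmax by blast
    moreover have "eventually P F'" unfolding F'_def eventually_inf_principal by simp
    ultimately show "eventually P F" using F(3) by blast
  qed
  then show ?thesis using F by blast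
qed



lemma bounded_cstar: "cstar_subalgebra {f :: 'x \<Rightarrow> complex. bounded (range f)}"
proof -
  let ?S = "{f :: 'x \<Rightarrow> complex. bounded (range f)}"
  have add: "(\<lambda>x. f x + g x) \<in> ?S" if "f \<in> ?S" "g \<in> ?S" for f g
  proof -
    from that obtain A B where "\<And>x. cmod (f x) \<le> A" "\<And>x. cmod (g x) \<le> B" unfolding bounded_iff by auto
    then have "cmod (f x + g x) \<le> A + B" for x by (meson add_mono norm_triangle_ineq order_trans)
    then show ?thesis unfolding bounded_iff by auto
  qed
  have mult: "(\<lambda>x. f x * g x) \<in> ?S" if "f \<in> ?S" "g \<in> ?S" for f g
  proof -
    from that obtain A B where AB: "\<And>x. cmod (f x) \<le> A" "\<And>x. cmod (g x) \<le> B" unfolding bounded_iff by auto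
    then have "cmod (f x * g x) \<le> A * B" for x unfolding norm_mult
      by (intro mult_mono) (auto intro: order_trans[OF norm_ge_zero])
    then show ?thesis unfolding bounded_iff by auto
  qed
  have scal: "(\<lambda>x. a * f x) \<in> ?S" if "f \<in> ?S" for f a
    using mult[OF _ that, of "\<lambda>_. a"] by simp
  have cnj: "(\<lambda>x. cnj (f x)) \<in> ?S" if "f \<in> ?S" for f
    using that unfolding bounded_iff by auto
  show ?thesis unfolding cstar_subalgebra_def
    using add mult scal cnj by (intro conjI ballI allI impI) auto
qed

lemma Aplus_bounded: "f \<in> Aplus b c \<Longrightarrow> bounded (range f)"
proof -
  assume f: "f \<in> Aplus b c"
  have "Aalg b c \<subseteq> {f. bounded (range f)}" unfolding Aalg_def by blast
  moreover have "(\<lambda>_. 1::complex) \<in> {f :: 'a \<Rightarrow> complex. bounded (range f)}" by simp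
  ultimately have "f \<in> {f. bounded (range f)}" using Aplus_D[OF f bounded_cstar] by blast
  then show ?thesis by simp
qed

lemma ultra_lim:
  fixes F :: "'a filter" and f :: "'a \<Rightarrow> complex"
  assumes F: "F \<noteq> bot" "\<forall>P. eventually P F \<or> eventually (\<lambda>x. \<not> P x) F" and fb: "bounded (range f)"
  shows "(f \<longlongrightarrow> Lim F f) F"
proof -
  obtain R where R: "\<And>x. cmod (f x) \<le> R" using fb unfolding bounded_iff by auto
  have K: "compact (cball (0::complex) R)" by simp
  have "filtermap f F \<noteq> bot" using F(1) by (simp add: filtermap_bot_iff)
  moreover have "eventually (\<lambda>y. y \<in> cball 0 R) (filtermap f F)"
    unfolding eventually_filtermap using R by (auto intro: always_eventually)
  ultimately obtain l where l: "inf (nhds l) (filtermap f F) \<noteq> bot"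
    using K unfolding compact_filter by blast
  have "(f \<longlongrightarrow> l) F"
    unfolding tendsto_def
  proof (intro allI impI)
    fix S :: "complex set" assume S: "open S" "l \<in> S"
    show "eventually (\<lambda>x. f x \<in> S) F"
    proof (rule ccontr)
      assume "\<not> eventually (\<lambda>x. f x \<in> S) F"
      then have "eventually (\<lambda>x. f x \<notin> S) F" using F(2) by blast
      then have e1: "eventually (\<lambda>y. y \<notin> S) (filtermap f F)" by (simp add: eventually_filtermap)
      have e2: "eventually (\<lambda>y. y \<in> S) (nhds l)" using S by (rule eventually_nhds_in_open)
      have "eventually (\<lambda>y. False) (inf (nhds l) (filtermap f F))"
        unfolding eventually_inf using e1 e2 by blast
      then show False using l eventually_False by blast
    qed
  qed
  moreover then have "Lim F f = l" using F(1) by (intro tendsto_Lim) auto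
  ultimately show ?thesis by simp
qed

lemma vanish:
  assumes wg: "weighted_graph b c" and cc: "canonically_compactifiable b c"
    and u: "u \<in> Dt b c" and uz: "\<forall>\<gamma>\<in>boundary (Aplus b c). \<gamma> u = 0" and e: "e > 0"
  shows "finite {x. e \<le> cmod (u x)}"
proof (rule ccontr)
  define A where "A = {x. e \<le> cmod (u x)}"
  assume "infinite {x. e \<le> cmod (u x)}"
  then have Ai: "infinite A" unfolding A_def .
  define G where "G = inf cofinite (principal A)"
  have Gnb: "G \<noteq> bot"
  proof
    assume "G = bot"
    then have "eventually (\<lambda>x. False) G" by simp
    then have "eventually (\<lambda>x. x \<in> A \<longrightarrow> False) cofinite" unfolding G_def eventually_inf_principal .
    then have "finite A" unfolding eventually_cofinite by simp
    then show False using Ai by simp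
  qed
  obtain F where F: "F \<noteq> bot" "F \<le> G" "\<forall>P. eventually P F \<or> eventually (\<lambda>x. \<not> P x) F"
    using ultra_exists[OF Gnb] by blast
  have Fcof: "eventually P F" if "eventually P cofinite" for P
    using filter_leD[OF F(2)] that unfolding G_def by (simp add: eventually_inf_principal eventually_mono)
  have FA: "eventually (\<lambda>x. x \<in> A) F"
    using filter_leD[OF F(2)] unfolding G_def by (simp add: eventually_inf_principal)
  define \<gamma> where "\<gamma> f = Lim F f" for f :: "'a \<Rightarrow> complex"
  have lim: "(f \<longlongrightarrow> \<gamma> f) F" if "f \<in> Aplus b c" for f
    unfolding \<gamma>_def by (rule ultra_lim[OF F(1) F(3) Aplus_bounded[OF that]])
  have gl: "\<gamma> f = l" if "(f \<longlongrightarrow> l) F" for f l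
    unfolding \<gamma>_def using F(1) that by (intro tendsto_Lim) auto
  have one: "\<gamma> (\<lambda>_. 1) = 1" by (rule gl) simp
  have ch: "is_character (Aplus b c) \<gamma>"
    unfolding is_character_def
  proof (intro conjI ballI allI)
    fix f g assume f: "f \<in> Aplus b c" and g: "g \<in> Aplus b c"
    show "\<gamma> (\<lambda>x. f x + g x) = \<gamma> f + \<gamma> g" by (rule gl, rule tendsto_add[OF lim[OF f] lim[OF g]])
    show "\<gamma> (\<lambda>x. f x * g x) = \<gamma> f * \<gamma> g" by (rule gl, rule tendsto_mult[OF lim[OF f] lim[OF g]])
  next
    fix a and f assume f: "f \<in> Aplus b c"
    show "\<gamma> (\<lambda>x. a * f x) = a * \<gamma> f" by (rule gl, rule tendsto_mult[OF tendsto_const lim[OF f]])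
  next
    show "\<exists>f\<in>Aplus b c. \<gamma> f \<noteq> 0" using one Aplus_one by (intro bexI[of _ "\<lambda>_. 1"]) auto
  qed
  have notpt: "\<not> (\<exists>s. \<forall>f\<in>Aplus b c. \<gamma> f = f s)"
  proof
    assume "\<exists>s. \<forall>f\<in>Aplus b c. \<gamma> f = f s"
    then obtain s where s: "\<forall>f\<in>Aplus b c. \<gamma> f = f s" by blast
    have dA: "(\<lambda>x. if x = s then (1::complex) else 0) \<in> Aplus b c"
      by (rule Dt_Aplus[OF cc Cc_Dt[OF wg delta_Cc]])
    have "eventually (\<lambda>x. x \<noteq> s) cofinite" unfolding eventually_cofinite by simp
    then have "eventually (\<lambda>x. x \<noteq> s) F" by (rule Fcof)
    then have "((\<lambda>x. if x = s then (1::complex) else 0) \<longlongrightarrow> 0) F"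
      by (rule tendsto_eventually[OF eventually_mono]) auto
    then have "\<gamma> (\<lambda>x. if x = s then (1::complex) else 0) = 0" by (rule gl)
    then show False using s dA by auto
  qed
  have gb: "\<gamma> \<in> boundary (Aplus b c)" unfolding boundary_def using ch notpt by blast
  have "\<gamma> u = 0" using uz gb by blast
  then have "((\<lambda>x. cmod (u x)) \<longlongrightarrow> 0) F"
    using tendsto_norm[OF lim[OF Dt_Aplus[OF cc u]]] by simp
  moreover have "eventually (\<lambda>x. e \<le> cmod (u x)) F" using FA unfolding A_def by simp
  ultimately have "e \<le> 0" using F(1) by (intro tendsto_lowerbound) auto
  then show False using e by simp
qed



definition clampc :: "real \<Rightarrow> complex \<Rightarrow> complex" where
  "clampc r z = closest_point (cball 0 r) z"

lemma clampc_props: assumes r: "r \<ge> 0"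
  shows "cmod (clampc r z) \<le> r" "cmod (clampc r z - clampc r w) \<le> cmod (z - w)"
    "cmod z \<le> r \<Longrightarrow> clampc r z = z" "cmod (clampc r z) \<le> cmod z"
proof -
  have ne: "cball (0::complex) r \<noteq> {}" using r by auto
  show "cmod (clampc r z) \<le> r"
    using closest_point_in_set[OF closed_cball ne, of z] unfolding clampc_def by (simp add: dist_norm)
  show lip: "cmod (clampc r z - clampc r w) \<le> cmod (z - w)" for z w
    using closest_point_lipschitz[OF convex_cball closed_cball ne, of z w] unfolding clampc_def by (simp add: dist_norm)
  show self: "cmod z \<le> r \<Longrightarrow> clampc r z = z" for z
    unfolding clampc_def by (rule closest_point_self) (simp add: dist_norm)
  have "clampc r 0 = 0" using self[of 0] r by simp
  then show "cmod (clampc r z) \<le> cmod z" using lip[of z 0] by simp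
qed

lemma tail_bound:
  fixes f :: "'a \<Rightarrow> real"
  assumes fs: "f summable_on UNIV" and f0: "\<And>p. f p \<ge> 0" and d: "d > 0"
  shows "\<exists>T. finite T \<and> (\<forall>h. (\<forall>p. 0 \<le> h p \<and> h p \<le> f p) \<longrightarrow> infsum h UNIV \<le> sum h T + d)"
proof -
  obtain T where T: "finite T" "dist (sum f T) (infsum f UNIV) \<le> d"
    using infsum_finite_approximation[OF fs d] by blast
  have "infsum h UNIV \<le> sum h T + d" if h: "\<forall>p. 0 \<le> h p \<and> h p \<le> f p" for h
  proof -
    have hs: "h summable_on UNIV" by (rule summable_on_comparison_test[OF fs]) (use h in auto)
    have fT: "f summable_on (- T)" by (rule summable_on_subset[OF fs]) auto
    have hT: "h summable_on (- T)" by (rule summable_on_subset[OF hs]) auto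
    have "infsum h UNIV = infsum h (T \<union> - T)" by simp
    also have "\<dots> = infsum h T + infsum h (- T)"
      by (rule infsum_Un_disjoint) (use T(1) hT in auto)
    also have "\<dots> \<le> sum h T + infsum f (- T)"
      using T(1) h by (simp add: infsum_mono[OF hT fT])
    also have "infsum f (- T) = infsum f UNIV - sum f T"
    proof -
      have "infsum f UNIV = infsum f (T \<union> - T)" by simp
      also have "\<dots> = infsum f T + infsum f (- T)"
        by (rule infsum_Un_disjoint) (use T(1) fT in auto)
      finally show ?thesis using T(1) by simp
    qed
    also have "infsum f UNIV - sum f T \<le> d" using T(2) by (simp add: dist_real_def)
    finally show ?thesis by simp
  qed
  then show ?thesis using T(1) by blast
qed


lemma supset_dir:
  assumes wg: "weighted_graph b c" and cc: "canonically_compactifiable b c"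
    and u: "u \<in> Dt b c" and uz: "\<forall>\<gamma>\<in>boundary (Aplus b c). \<gamma> u = 0"
  shows "u \<in> Dt_o b c v0"
proof -
  have bpos: "b x y \<ge> 0" "c x \<ge> 0" for x y using wgD[OF wg] by auto
  have "\<exists>g\<in>Cc. norm_o b c v0 (\<lambda>x. u x - g x) < e" if e: "e > 0" for e
  proof -
    define d where "d = e\<^sup>2 / 4"
    have d: "d > 0" unfolding d_def using e by simp
    obtain T1 where T1: "finite T1" "\<And>h. (\<forall>p. 0 \<le> h p \<and> h p \<le> (\<lambda>(x,y). b x y * (cmod (u x - u y))\<^sup>2) p)
        \<Longrightarrow> infsum h UNIV \<le> sum h T1 + d"
      using tail_bound[OF DtD(1)[OF u] _ d] bpos by (auto simp: case_prod_beta)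
    obtain T2 where T2: "finite T2" "\<And>h. (\<forall>p. 0 \<le> h p \<and> h p \<le> c p * (cmod (u p))\<^sup>2)
        \<Longrightarrow> infsum h UNIV \<le> sum h T2 + d"
      using tail_bound[OF DtD(2)[OF u] _ d] bpos by auto
    define B1 where "B1 = (\<Sum>p\<in>T1. b (fst p) (snd p))"
    define B2 where "B2 = (\<Sum>x\<in>T2. c x)"
    have B0: "B1 \<ge> 0" "B2 \<ge> 0" unfolding B1_def B2_def using bpos by (auto intro: sum_nonneg)
    define K where "K = 2 * B1 + B2 + 1"
    have K0: "K > 0" unfolding K_def using B0 by simp
    define r where "r = min 1 (e\<^sup>2 / (4 * K))"
    have r0: "r > 0" unfolding r_def using e K0 by simp
    have r1: "r \<le> 1" unfolding r_def by simp
    have rK: "r * K \<le> e\<^sup>2 / 4"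
    proof -
      have "r \<le> e\<^sup>2 / (4 * K)" unfolding r_def by simp
      then show ?thesis using K0 by (simp add: field_simps)
    qed
    have rr: "r\<^sup>2 \<le> r" using r0 r1 by (simp add: power2_eq_square mult_le_cancel_right1)
    define w where "w x = clampc r (u x)" for x
    define g where "g x = u x - w x" for x
    have wr: "cmod (w x) \<le> r" for x unfolding w_def using clampc_props(1)[of r] r0 by simp
    have gCc: "g \<in> Cc"
    proof -
      have "{x. g x \<noteq> 0} \<subseteq> {x. r \<le> cmod (u x)}"
      proof
        fix x assume "x \<in> {x. g x \<noteq> 0}"
        then have "w x \<noteq> u x" unfolding g_def by simp
        then have "\<not> cmod (u x) \<le> r" unfolding w_def using clampc_props(3)[of r "u x"] r0 by auto
        then show "x \<in> {x. r \<le> cmod (u x)}" by simp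
      qed
      moreover have "finite {x. r \<le> cmod (u x)}" by (rule vanish[OF wg cc u uz r0])
      ultimately show ?thesis unfolding Cc_def by (auto intro: finite_subset)
    qed
    have ug: "(\<lambda>x. u x - g x) = w" unfolding g_def by simp
    define hE where "hE = (\<lambda>(x,y). b x y * (cmod (w x - w y))\<^sup>2)"
    define hV where "hV = (\<lambda>x. c x * (cmod (w x))\<^sup>2)"
    have hE1: "infsum hE UNIV \<le> sum hE T1 + d"
    proof (rule T1(2), intro allI conjI)
      fix p :: "'a \<times> 'a" obtain x y where p: "p = (x,y)" by (cases p)
      show "0 \<le> hE p" unfolding hE_def p using bpos by simp
      have "cmod (w x - w y) \<le> cmod (u x - u y)" unfolding w_def using clampc_props(2) r0 by simp
      then have "(cmod (w x - w y))\<^sup>2 \<le> (cmod (u x - u y))\<^sup>2" by (intro power_mono) auto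
      then show "hE p \<le> (\<lambda>(x,y). b x y * (cmod (u x - u y))\<^sup>2) p"
        unfolding hE_def p using bpos by (simp add: mult_left_mono)
    qed
    have hE2: "sum hE T1 \<le> 4 * r\<^sup>2 * B1"
    proof -
      have "hE p \<le> 4 * r\<^sup>2 * b (fst p) (snd p)" for p
      proof -
        obtain x y where p: "p = (x,y)" by (cases p)
        have "cmod (w x - w y) \<le> 2 * r" using norm_triangle_ineq4[of "w x" "w y"] wr[of x] wr[of y] by simp
        then have "(cmod (w x - w y))\<^sup>2 \<le> (2 * r)\<^sup>2" by (intro power_mono) auto
        then have "b x y * (cmod (w x - w y))\<^sup>2 \<le> b x y * (2 * r)\<^sup>2" using bpos by (simp add: mult_left_mono)
        then show ?thesis unfolding hE_def p by (simp add: power_mult_distrib algebra_simps)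
      qed
      then have "sum hE T1 \<le> (\<Sum>p\<in>T1. 4 * r\<^sup>2 * b (fst p) (snd p))" by (intro sum_mono)
      then show ?thesis unfolding B1_def by (simp add: sum_distrib_left)
    qed
    have hV1: "infsum hV UNIV \<le> sum hV T2 + d"
    proof (rule T2(2), intro allI conjI)
      fix x
      show "0 \<le> hV x" unfolding hV_def using bpos by simp
      have "cmod (w x) \<le> cmod (u x)" unfolding w_def using clampc_props(4) r0 by simp
      then have "(cmod (w x))\<^sup>2 \<le> (cmod (u x))\<^sup>2" by (intro power_mono) auto
      then show "hV x \<le> c x * (cmod (u x))\<^sup>2" unfolding hV_def using bpos by (simp add: mult_left_mono)
    qed
    have hV2: "sum hV T2 \<le> r\<^sup>2 * B2"
    proof -
      have "hV x \<le> r\<^sup>2 * c x" for x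
      proof -
        have "(cmod (w x))\<^sup>2 \<le> r\<^sup>2" using wr[of x] by (intro power_mono) auto
        then show ?thesis unfolding hV_def using bpos by (simp add: mult_left_mono mult.commute)
      qed
      then have "sum hV T2 \<le> (\<Sum>x\<in>T2. r\<^sup>2 * c x)" by (intro sum_mono)
      then show ?thesis unfolding B2_def by (simp add: sum_distrib_left)
    qed
    have Qw: "Qt b c w = (1/2) * infsum hE UNIV + infsum hV UNIV"
      unfolding Qt_def hE_def hV_def by simp
    have "(norm_o b c v0 w)\<^sup>2 = Qt b c w + (cmod (w v0))\<^sup>2" by (rule norm_o_sq[OF wg])
    also have "\<dots> \<le> (1/2) * (4 * r\<^sup>2 * B1 + d) + (r\<^sup>2 * B2 + d) + r\<^sup>2"
    proof -
      have "(cmod (w v0))\<^sup>2 \<le> r\<^sup>2" using wr[of v0] by (intro power_mono) auto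
      moreover have "infsum hE UNIV \<le> 4 * r\<^sup>2 * B1 + d" using hE1 hE2 by linarith
      moreover have "infsum hV UNIV \<le> r\<^sup>2 * B2 + d" using hV1 hV2 by linarith
      ultimately show ?thesis unfolding Qw by (intro add_mono mult_left_mono) auto
    qed
    also have "\<dots> = r\<^sup>2 * K + 3/2 * d" unfolding K_def by (simp add: algebra_simps)
    also have "\<dots> \<le> r * K + 3/2 * d" using rr K0 by (simp add: mult_right_mono)
    also have "\<dots> < e\<^sup>2"
    proof -
      have e2: "e\<^sup>2 > 0" using e by simp
      show ?thesis unfolding d_def using rK e2 by linarith
    qed
    finally have "(norm_o b c v0 w)\<^sup>2 < e\<^sup>2" .
    then have "norm_o b c v0 w < e" using e norm_o_nonneg[OF wg, of v0 w] by (simp add: power_less_imp_less_base)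
    then show ?thesis using gCc ug by (intro bexI[of _ g]) auto
  qed
  then show ?thesis unfolding Dt_o_def using u by blast
qed


theorem mainTheorem11:
  fixes b :: "'x \<Rightarrow> 'x \<Rightarrow> real" and c :: "'x \<Rightarrow> real" and v0 :: 'x
  assumes "countable (UNIV :: 'x set)" and "infinite (UNIV :: 'x set)"
    and "weighted_graph b c" and "graph_connected b"
    and "canonically_compactifiable b c"
  shows "Dt_o b c v0 = {u \<in> Dt b c. \<forall>\<gamma>\<in>boundary (Aplus b c). \<gamma> u = 0}"
proof (intro set_eqI iffI)
  fix u assume u: "u \<in> Dt_o b c v0"
  have "u \<in> Dt b c" using u unfolding Dt_o_def by simp
  moreover have "\<forall>\<gamma>\<in>boundary (Aplus b c). \<gamma> u = 0"
    using subset_dir[OF assms(3,4,5) u] by blast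
  ultimately show "u \<in> {u \<in> Dt b c. \<forall>\<gamma>\<in>boundary (Aplus b c). \<gamma> u = 0}" by simp
next
  fix u assume "u \<in> {u \<in> Dt b c. \<forall>\<gamma>\<in>boundary (Aplus b c). \<gamma> u = 0}"
  then have "u \<in> Dt b c" "\<forall>\<gamma>\<in>boundary (Aplus b c). \<gamma> u = 0" by auto
  then show "u \<in> Dt_o b c v0" by (rule supset_dir[OF assms(3,5)])
qed

end
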